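(* For every $k\in\mathbb N$, the element $xC_ky$ (free product) belongs to $U$, the subalgebra of the $q$-shuffle algebra $(\mathbb V,\star)$ generated by $x$ and $y$.
   Context: $\mathbb F$ is a field of characteristic zero and $q\in\mathbb F$ is nonzero and not a root of unity; $[n]_q=(q^n-q^{-n})/(q-q^{-1})$. $\mathbb V$ is the free algebra on noncommuting letters $x,y$; a word is a product of letters (the empty word is $1$), and words form a basis. The $q$-shuffle product $\star$ on $\mathbb V$ is the bilinear product with $1\star v=v\star 1=v$ and, for nontrivial words $u=u_1\cdots u_r$, $v=v_1\cdots v_s$ (letters $u_i,v_j$), $u\star v=u_1\bigl((u_2\cdots u_r)\star v\bigr)+v_1\bigl(u\star(v_2\cdots v_s)\bigr)q^{(u_1,v_1)+(u_2,v_1)+\cdots+(u_r,v_1)}$, where juxtaposition is concatenation and $(x,x)=(y,y)=2$, $(x,y)=(y,x)=-2$. Set $\overline x=1$, $\overline y=-1$. A word $u_1\cdots u_n$ is Catalan if $\overline u_1+\cdots+\overline u_i\ge0$ for $1\le i\le n-1$ and $=0$ for $i=n$. For $n\in\mathbb N$, $C_n=\sum u_1u_2\cdots u_{2n}\,[1]_q[1+\overline u_1]_q[1+\overline u_1+\overline u_2]_q\cdots[1+\overline u_1+\cdots+\overline u_{2n}]_q$, summed over all Catalan words of length $2n$ (so $C_0=1$). *)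

theory Defs
  imports Main "HOL-Library.Poly_Mapping"
begin

datatype letter = X | Y

type_synonym 'f vec = "letter list \<Rightarrow>\<^sub>0 'f"

definition lbar :: "letter \<Rightarrow> int" where
  "lbar a = (if a = X then 1 else -1)"

definition lpair :: "letter \<Rightarrow> letter \<Rightarrow> int" where
  "lpair a b = (if a = b then 2 else -2)"

definition qint :: "'f::field \<Rightarrow> int \<Rightarrow> 'f" where
  "qint q n = (q powi n - q powi (-n)) / (q - inverse q)"

definition smul :: "'f::field \<Rightarrow> 'f vec \<Rightarrow> 'f vec" where
  "smul c p = Poly_Mapping.map (\<lambda>a. c * a) p"

definition lcons :: "letter \<Rightarrow> 'f::field vec \<Rightarrow> 'f vec" where
  "lcons a p = (\<Sum>w\<in>Poly_Mapping.keys p. Poly_Mapping.single (a # w) (Poly_Mapping.lookup p w))"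

fun wshuffle :: "'f::field \<Rightarrow> letter list \<Rightarrow> letter list \<Rightarrow> 'f vec" where
  "wshuffle q [] v = Poly_Mapping.single v 1"
| "wshuffle q (a # u) [] = Poly_Mapping.single (a # u) 1"
| "wshuffle q (a # u) (b # v) =
     lcons a (wshuffle q u (b # v))
     + smul (q powi (\<Sum>c\<leftarrow>a # u. lpair c b)) (lcons b (wshuffle q (a # u) v))"

definition qshuffle :: "'f::field \<Rightarrow> 'f vec \<Rightarrow> 'f vec \<Rightarrow> 'f vec" where
  "qshuffle q f g = (\<Sum>u\<in>Poly_Mapping.keys f. \<Sum>v\<in>Poly_Mapping.keys g.
      smul (Poly_Mapping.lookup f u * Poly_Mapping.lookup g v) (wshuffle q u v))"

inductive_set Ualg :: "'f::field \<Rightarrow> 'f vec set" for q where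
  one: "Poly_Mapping.single [] 1 \<in> Ualg q"
| genx: "Poly_Mapping.single [X] 1 \<in> Ualg q"
| geny: "Poly_Mapping.single [Y] 1 \<in> Ualg q"
| add: "f \<in> Ualg q \<Longrightarrow> g \<in> Ualg q \<Longrightarrow> f + g \<in> Ualg q"
| smul: "f \<in> Ualg q \<Longrightarrow> smul c f \<in> Ualg q"
| mult: "f \<in> Ualg q \<Longrightarrow> g \<in> Ualg q \<Longrightarrow> qshuffle q f g \<in> Ualg q"

definition catalan :: "letter list \<Rightarrow> bool" where
  "catalan w \<longleftrightarrow> (\<forall>i\<in>{1..<length w}. (\<Sum>j<i. lbar (w ! j)) \<ge> 0)
                 \<and> (\<Sum>j<length w. lbar (w ! j)) = 0"

definition catcoeff :: "'f::field \<Rightarrow> letter list \<Rightarrow> 'f" where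
  "catcoeff q w = (\<Prod>i\<in>{0..length w}. qint q (1 + (\<Sum>j<i. lbar (w ! j))))"

definition Cat :: "'f::field \<Rightarrow> nat \<Rightarrow> 'f vec" where
  "Cat q n = (\<Sum>w\<in>{w. length w = 2 * n \<and> catalan w}.
               Poly_Mapping.single w (catcoeff q w))"

definition xvy :: "'f::field vec \<Rightarrow> 'f vec" where
  "xvy p = (\<Sum>w\<in>Poly_Mapping.keys p. Poly_Mapping.single (X # w @ [Y]) (Poly_Mapping.lookup p w))"

end

theory Submission
  imports Defs
begin

definition dl :: "letter \<Rightarrow> (letter list \<Rightarrow> 'f) \<Rightarrow> letter list \<Rightarrow> 'f" where
  "dl a f = (\<lambda>w. f (a # w))"

definition tw :: "'f::field \<Rightarrow> letter \<Rightarrow> (letter list \<Rightarrow> 'f) \<Rightarrow> letter list \<Rightarrow> 'f" where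
  "tw q a f = (\<lambda>w. q powi (\<Sum>d\<leftarrow>w. lpair d a) * f w)"

fun star :: "'f::field \<Rightarrow> (letter list \<Rightarrow> 'f) \<Rightarrow> (letter list \<Rightarrow> 'f) \<Rightarrow> letter list \<Rightarrow> 'f" where
  "star q f g [] = f [] * g []"
| "star q f g (a # w) = star q (dl a f) g w + star q (tw q a f) (dl a g) w"

lemma star_lin_l:
  "star q (\<lambda>w. c * f1 w + d * f2 w) g w = c * star q f1 g w + d * star q f2 g w"
proof (induction w arbitrary: f1 f2 g)
  case Nil
  then show ?case by (simp add: algebra_simps)
next
  case (Cons a w)
  have 1: "dl a (\<lambda>w. c * f1 w + d * f2 w) = (\<lambda>w. c * dl a f1 w + d * dl a f2 w)"
    by (simp add: dl_def)
  have 2: "tw q a (\<lambda>w. c * f1 w + d * f2 w) = (\<lambda>w. c * tw q a f1 w + d * tw q a f2 w)"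
    by (simp add: tw_def algebra_simps)
  show ?case by (simp only: star.simps 1 2 Cons.IH) (simp add: algebra_simps)
qed

lemma star_lin_r:
  "star q f (\<lambda>w. c * g1 w + d * g2 w) w = c * star q f g1 w + d * star q f g2 w"
proof (induction w arbitrary: f g1 g2)
  case Nil
  then show ?case by (simp add: algebra_simps)
next
  case (Cons a w)
  have 1: "dl a (\<lambda>w. c * g1 w + d * g2 w) = (\<lambda>w. c * dl a g1 w + d * dl a g2 w)"
    by (simp add: dl_def)
  show ?case by (simp only: star.simps 1 Cons.IH) (simp add: algebra_simps)
qed

lemma star_scale_l [simp]: "star q (\<lambda>w. c * f w) g w = c * star q f g w"
  using star_lin_l[of q c f 0 f g w] by simp
lemma star_scale_r [simp]: "star q f (\<lambda>w. c * g w) w = c * star q f g w"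
  using star_lin_r[of q f c g 0 g w] by simp
lemma star_add_l [simp]: "star q (\<lambda>w. f1 w + f2 w) g w = star q f1 g w + star q f2 g w"
  using star_lin_l[of q 1 f1 1 f2 g w] by simp
lemma star_add_r [simp]: "star q f (\<lambda>w. g1 w + g2 w) w = star q f g1 w + star q f g2 w"
  using star_lin_r[of q f 1 g1 1 g2 w] by simp
lemma star_zero_l [simp]: "star q (\<lambda>w. 0) g w = 0"
  using star_lin_l[of q 0 "\<lambda>w. 0" 0 "\<lambda>w. 0" g w] by simp
lemma star_zero_r [simp]: "star q f (\<lambda>w. 0) w = 0"
  using star_lin_r[of q f 0 "\<lambda>w. 0" 0 "\<lambda>w. 0" w] by simp

definition dlt :: "letter list \<Rightarrow> letter list \<Rightarrow> 'f::field" where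
  "dlt u = (\<lambda>w. if w = u then 1 else 0)"

lemma dl_dlt_Nil [simp]: "dl a (dlt []) = (\<lambda>w. 0)"
  by (simp add: dl_def dlt_def)
lemma dl_dlt_single [simp]: "dl a (dlt [b]) = (if a = b then dlt [] else (\<lambda>w. 0))"
  by (auto simp: dl_def dlt_def fun_eq_iff)
lemma tw_dlt_Nil [simp]: "tw q a (dlt []) = dlt []"
  by (auto simp: tw_def dlt_def fun_eq_iff)

lemma star_unit_l [simp]: "star q (dlt []) f w = f w"
proof (induction w arbitrary: f)
  case Nil then show ?case by (simp add: dlt_def)
next
  case (Cons a w)
  have "star q (dlt []) f (a # w) = star q (dlt []) (dl a f) w" by simp
  also have "\<dots> = f (a # w)" using Cons.IH by (simp add: dl_def)
  finally show ?case .
qed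
lemma star_unit_r [simp]: "star q f (dlt []) w = f w"
proof (induction w arbitrary: f)
  case Nil then show ?case by (simp add: dlt_def)
next
  case (Cons a w)
  have "star q f (dlt []) (a # w) = star q (dl a f) (dlt []) w" by simp
  also have "\<dots> = f (a # w)" using Cons.IH by (simp add: dl_def)
  finally show ?case .
qed

definition ht :: "letter list \<Rightarrow> int" where "ht w = (\<Sum>d\<leftarrow>w. lbar d)"

lemma lpair_sum_X: "(\<Sum>d\<leftarrow>w. lpair d X) = 2 * ht w"
proof (induction w)
  case (Cons a w) then show ?case by (cases a) (auto simp: ht_def lpair_def lbar_def)
qed (auto simp: ht_def)
lemma lpair_sum_Y: "(\<Sum>d\<leftarrow>w. lpair d Y) = -2 * ht w"
proof (induction w)
  case (Cons a w) then show ?case by (cases a) (auto simp: ht_def lpair_def lbar_def)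
qed (auto simp: ht_def)
lemmas lpair_sum = lpair_sum_X lpair_sum_Y

lemma tw_hom:
  assumes "\<And>w. f w \<noteq> 0 \<Longrightarrow> ht w = c"
  shows "tw q X f = (\<lambda>w. q powi (2*c) * f w)" "tw q Y f = (\<lambda>w. q powi (-2*c) * f w)"
  using assms by (auto simp: tw_def lpair_sum fun_eq_iff)

definition cx :: "letter list \<Rightarrow> nat" where "cx w = length (filter (\<lambda>a. a = X) w)"
lemma cx_simps [simp]: "cx [] = 0" "cx (X # w) = Suc (cx w)" "cx (Y # w) = cx w"
  by (simp_all add: cx_def)

lemma lbar_simps [simp]: "lbar X = 1" "lbar Y = -1"
  by (simp_all add: lbar_def)

lemma qint_0 [simp]: "qint q 0 = 0" by (simp add: qint_def)

fun E :: "'f::field \<Rightarrow> int \<Rightarrow> letter list \<Rightarrow> 'f" where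
  "E q h [] = (if h = 0 then 1 else 0)"
| "E q h (a # w) = qint q (1 + h) * E q (h + lbar a) w"

lemma E_neg1 [simp]: "E q (-1) w = 0" by (cases w) auto

lemma E_ht: "E q h w \<noteq> 0 \<Longrightarrow> ht w = -h"
proof (induction w arbitrary: h)
  case Nil then show ?case by (simp add: ht_def split: if_splits)
next
  case (Cons a w)
  then have "E q (h + lbar a) w \<noteq> 0" by simp
  from Cons.IH[OF this] show ?case by (simp add: ht_def)
qed

lemma E_neg1_fun [simp]: "E q (-1) = (\<lambda>w. 0)" by (simp add: fun_eq_iff)

lemma dl_E_X [simp]: "dl X (E q h) = (\<lambda>w. qint q (1+h) * E q (h+1) w)" by (simp add: dl_def)
lemma dl_E_Y [simp]: "dl Y (E q h) = (\<lambda>w. qint q (1+h) * E q (h-1) w)" by (simp add: dl_def)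
lemma tw_E [simp]: "tw q X (E q h) = (\<lambda>w. q powi (-2*h) * E q h w)"
   "tw q Y (E q h) = (\<lambda>w. q powi (2*h) * E q h w)"
  using tw_hom[of "E q h" "-h" q] E_ht by auto

definition Ey :: "'f::field \<Rightarrow> int \<Rightarrow> letter list \<Rightarrow> 'f" where
  "Ey q g w = (if w \<noteq> [] \<and> last w = Y then E q g (butlast w) else 0)"

lemma Ey_Nil [simp]: "Ey q g [] = 0" by (simp add: Ey_def)
lemma Ey_Cons: "Ey q g (a # w) = (if w = [] then (if a = Y \<and> g = 0 then 1 else 0)
    else qint q (1+g) * Ey q (g + lbar a) w)"
  by (cases "w = []") (auto simp: Ey_def)
lemma Ey_neg1 [simp]: "Ey q (-1) w = 0" by (simp add: Ey_def)
lemma dl_Ey_X [simp]: "dl X (Ey q g) = (\<lambda>w. qint q (1+g) * Ey q (g+1) w)"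
  by (auto simp: dl_def Ey_Cons fun_eq_iff)
lemma dl_Ey_Y0 [simp]: "dl Y (Ey q 0) = dlt []"
  by (auto simp: dl_def Ey_Cons fun_eq_iff dlt_def)
lemma dl_Ey_Y: "g \<noteq> 0 \<Longrightarrow> dl Y (Ey q g) = (\<lambda>w. qint q (1+g) * Ey q (g-1) w)"
  by (auto simp: dl_def Ey_Cons fun_eq_iff)
lemma Ey_ht: "Ey q g w \<noteq> 0 \<Longrightarrow> ht w = -(g+1)"
proof -
  assume a: "Ey q g w \<noteq> 0"
  then have w: "w \<noteq> []" "last w = Y" and e: "E q g (butlast w) \<noteq> 0" by (auto simp: Ey_def split: if_splits)
  have "w = butlast w @ [Y]" using w by (metis append_butlast_last_id)
  then have "ht w = ht (butlast w) - 1" by (metis ht_def lbar_simps(2) map_append sum_list_append list.simps(8,9) sum_list_simps(2) sum_list.Nil add.right_neutral diff_minus_eq_add uminus_add_conv_diff)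
  then show ?thesis using E_ht[OF e] by simp
qed
lemma tw_Ey [simp]: "tw q X (Ey q g) = (\<lambda>w. q powi (-2*(g+1)) * Ey q g w)"
   "tw q Y (Ey q g) = (\<lambda>w. q powi (2*(g+1)) * Ey q g w)"
  using tw_hom[of "Ey q g" "-(g+1)" q, OF Ey_ht] by (simp_all add: algebra_simps)

lemma Ey_X: "Ey q g (X # w) = qint q (1+g) * Ey q (g+1) w"
  using fun_cong[OF dl_Ey_X[of q g], of w] by (simp add: dl_def)
lemma Ey_Y0: "Ey q 0 (Y # w) = dlt [] w"
  using fun_cong[OF dl_Ey_Y0[of q], of w] by (simp add: dl_def)
lemma Ey_Y: "g \<noteq> 0 \<Longrightarrow> Ey q g (Y # w) = qint q (1+g) * Ey q (g-1) w"
  using fun_cong[OF dl_Ey_Y[of g q], of w] by (simp add: dl_def)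

definition SEy :: "'f::field \<Rightarrow> 'f \<Rightarrow> int \<Rightarrow> letter list \<Rightarrow> 'f" where
  "SEy q c g w = c ^ cx w * Ey q g w"
lemma dl_SEy_X [simp]: "dl X (SEy q c g) = (\<lambda>w. (c * qint q (1+g)) * SEy q c (g+1) w)"
  by (auto simp: dl_def SEy_def Ey_Cons fun_eq_iff)
lemma dl_SEy_Y0 [simp]: "dl Y (SEy q c 0) = dlt []"
  by (auto simp: dl_def SEy_def Ey_Cons fun_eq_iff dlt_def)
lemma dl_SEy_Y: "g \<noteq> 0 \<Longrightarrow> dl Y (SEy q c g) = (\<lambda>w. qint q (1+g) * SEy q c (g-1) w)"
  by (auto simp: dl_def SEy_def Ey_Cons fun_eq_iff)
lemma tw_SEy [simp]: "tw q X (SEy q c g) = (\<lambda>w. q powi (-2*(g+1)) * SEy q c g w)"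
   "tw q Y (SEy q c g) = (\<lambda>w. q powi (2*(g+1)) * SEy q c g w)"
proof -
  have h: "\<And>w. SEy q c g w \<noteq> 0 \<Longrightarrow> ht w = -(g+1)" by (auto simp: SEy_def dest: Ey_ht)
  show "tw q X (SEy q c g) = (\<lambda>w. q powi (-2*(g+1)) * SEy q c g w)"
    using tw_hom(1)[of "SEy q c g" "-(g+1)" q, OF h] by (simp add: algebra_simps)
  show "tw q Y (SEy q c g) = (\<lambda>w. q powi (2*(g+1)) * SEy q c g w)"
    using tw_hom(2)[of "SEy q c g" "-(g+1)" q, OF h] by (simp add: algebra_simps)
qed

definition P :: "'f::field \<Rightarrow> letter list \<Rightarrow> 'f" where
  "P q w = (case w of [] \<Rightarrow> 0 | a # u \<Rightarrow> (if a = X then Ey q 0 u else 0))"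
lemma dl_P [simp]: "dl X (P q) = Ey q 0" "dl Y (P q) = (\<lambda>w. 0)"
  by (auto simp: dl_def P_def fun_eq_iff)
lemma P_ht: "P q w \<noteq> 0 \<Longrightarrow> ht w = 0"
  by (auto simp: P_def ht_def split: list.splits if_splits dest!: Ey_ht)
lemma tw_P [simp]: "tw q X (P q) = P q" "tw q Y (P q) = P q"
  using tw_hom[of "P q" 0 q] P_ht by auto

definition SP :: "'f::field \<Rightarrow> 'f \<Rightarrow> letter list \<Rightarrow> 'f" where
  "SP q c w = c ^ cx w * P q w"
lemma dl_SP [simp]: "dl X (SP q c) = (\<lambda>w. c * SEy q c 0 w)" "dl Y (SP q c) = (\<lambda>w. 0)"
  by (auto simp: dl_def SP_def P_def SEy_def fun_eq_iff)
lemma tw_SP [simp]: "tw q X (SP q c) = SP q c" "tw q Y (SP q c) = SP q c"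
proof -
  have h: "\<And>w. SP q c w \<noteq> 0 \<Longrightarrow> ht w = 0" by (auto simp: SP_def dest: P_ht)
  show "tw q X (SP q c) = SP q c" using tw_hom(1)[of "SP q c" 0 q, OF h] by simp
  show "tw q Y (SP q c) = SP q c" using tw_hom(2)[of "SP q c" 0 q, OF h] by simp
qed

definition A :: "'f::field \<Rightarrow> letter list \<Rightarrow> 'f" where
  "A q w = (case w of [] \<Rightarrow> 0 | a # u \<Rightarrow> (if a = X then E q 0 u else 0))"
lemma dl_A [simp]: "dl X (A q) = E q 0" "dl Y (A q) = (\<lambda>w. 0)"
  by (auto simp: dl_def A_def fun_eq_iff)
lemma A_ht: "A q w \<noteq> 0 \<Longrightarrow> ht w = 1"
  by (auto simp: A_def ht_def split: list.splits if_splits dest!: E_ht)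
lemma tw_A [simp]: "tw q X (A q) = (\<lambda>w. q powi 2 * A q w)" "tw q Y (A q) = (\<lambda>w. q powi (-2) * A q w)"
  using tw_hom[of "A q" 1 q] A_ht by auto

definition NE :: "'f::field \<Rightarrow> int \<Rightarrow> letter list \<Rightarrow> 'f" where
  "NE q h w = of_nat (cx w) * E q h w"
lemma dl_NE [simp]: "dl X (NE q h) = (\<lambda>w. qint q (1+h) * NE q (h+1) w + qint q (1+h) * E q (h+1) w)"
  "dl Y (NE q h) = (\<lambda>w. qint q (1+h) * NE q (h-1) w)"
  by (auto simp: dl_def NE_def fun_eq_iff algebra_simps)
lemma tw_NE [simp]: "tw q X (NE q h) = (\<lambda>w. q powi (-2*h) * NE q h w)"
   "tw q Y (NE q h) = (\<lambda>w. q powi (2*h) * NE q h w)"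
  using tw_hom[of "NE q h" "-h" q] E_ht by (auto simp: NE_def)

lemma tw_dlt [simp]: "tw q X (dlt [X]) = (\<lambda>w. q powi 2 * dlt [X] w)"
  "tw q Y (dlt [X]) = (\<lambda>w. q powi (-2) * dlt [X] w)"
  "tw q X (dlt [Y]) = (\<lambda>w. q powi (-2) * dlt [Y] w)"
  "tw q Y (dlt [Y]) = (\<lambda>w. q powi 2 * dlt [Y] w)"
  by (auto simp: tw_def dlt_def fun_eq_iff lpair_def)


locale qctx =
  fixes q :: "'f::field"
  assumes q0: "q \<noteq> 0" and qq: "q * q \<noteq> 1" and qnz: "\<And>n::int. n \<noteq> 0 \<Longrightarrow> qint q n \<noteq> 0"
begin

lemma D0: "q - inverse q \<noteq> 0"
  using q0 qq by (auto simp: field_simps)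

lemma qint_1 [simp]: "qint q 1 = 1"
  using D0 by (simp add: qint_def)

lemma qint_ex: "q powi n = t \<Longrightarrow> ti = inverse t \<Longrightarrow> qint q n = (t - ti) / (q - inverse q)"
  by (simp add: qint_def power_int_minus)

lemma qint_mul: "(q - inverse q) * qint q n = q powi n - q powi (-n)"
  using D0 by (simp add: qint_def)

lemma pw_add': "q powi (a + b) = q powi a * q powi b"
  using q0 by (simp add: power_int_add)
lemma pw_neg: "q powi (-a) = inverse (q powi a)"
  by (simp add: power_int_minus)

lemma pw_mult: "q powi a * q powi b = q powi (a+b)"
  using q0 by (simp add: power_int_add)

lemma sc_Y: "qint q (1+h) * qint q (2+h) = qint q (1+h) * qint q h + qint q (2*h+2)"
proof -
  obtain z zi r D where z: "z = q powi h" and zi: "zi = inverse z" and r: "r = inverse q" and D: "D = q - inverse q" by simp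
  have z0: "z \<noteq> 0" using q0 z by simp
  have qr: "q*r = 1" using q0 r by simp
  have zz: "z*zi = 1" using z0 zi by simp
  have D1: "D \<noteq> 0" using D D0 by simp
  have a0: "qint q h = (z - zi)/D" unfolding D by (rule qint_ex) (simp_all add: z zi)
  have a1: "qint q (1+h) = (q*z - r*zi)/D" unfolding D
    by (rule qint_ex) (simp_all add: z zi r power_int_add q0)
  have a2: "qint q (2+h) = (q^2*z - r^2*zi)/D" unfolding D
    by (rule qint_ex) (simp_all add: z zi r power_int_add q0 power_inverse)
  have a3: "qint q (2*h+2) = (q^2*z^2 - r^2*zi^2)/D" unfolding D
    by (rule qint_ex) (simp_all add: z zi r power_int_add q0 power_inverse power_int_mult mult.commute[of 2] power_mult_distrib)
  have "(q*z - r*zi)*(q^2*z - r^2*zi) = (q*z - r*zi)*(z - zi) + D*(q^2*z^2 - r^2*zi^2)"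
    unfolding D r[symmetric] using qr zz by algebra
  then show ?thesis unfolding a0 a1 a2 a3 using D1
    apply (simp add: field_simps power2_eq_square) by algebra
qed

lemma Yid: "h \<ge> 0 \<Longrightarrow> (q - inverse q) * qint q (1+h) * E q (h+1) w
   = q powi 2 * star q (E q h) (dlt [Y]) w - q powi (-2-2*h) * star q (dlt [Y]) (E q h) w"
proof (induction w arbitrary: h)
  case Nil
  then show ?case by (simp add: dlt_def)
next
  case (Cons a w)
  show ?case
  proof (cases a)
    case X
    let ?S1 = "star q (E q (h+1)) (dlt [Y]) w"
    let ?S2 = "star q (dlt [Y]) (E q (h+1)) w"
    have e1: "star q (E q h) (dlt [Y]) (X#w) = qint q (1+h) * ?S1" by simp
    have e2: "star q (dlt [Y]) (E q h) (X#w) = q powi (-2) * (qint q (1+h) * ?S2)" by simp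
    have e3: "E q (h+1) (X#w) = qint q (2+h) * E q (h+2) w" by (simp add: algebra_simps)
    have IH: "(q - inverse q) * qint q (2+h) * E q (h+2) w = q powi 2 * ?S1 - q powi (-4-2*h) * ?S2"
      using Cons.IH[of "h+1"] Cons.prems by (simp add: algebra_simps)
    have pw: "q powi (-2-2*h) * q powi (-2) = q powi (-4-2*h)"
      using q0 by (simp add: power_int_add[symmetric])
    show ?thesis unfolding X e1 e2 e3 using IH pw by algebra
  next
    case Y
    show ?thesis
    proof (cases "h = 0")
      case True
      have "(q - inverse q) * qint q 2 = q powi 2 - q powi (-2)"
        using D0 by (simp add: qint_def)
      then show ?thesis unfolding Y True apply (simp add: algebra_simps) by algebra
    next
      case False
      let ?S1 = "star q (E q (h-1)) (dlt [Y]) w"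
      let ?S2 = "star q (dlt [Y]) (E q (h-1)) w"
      have e1: "star q (E q h) (dlt [Y]) (Y#w) = qint q (1+h) * ?S1 + q powi (2*h) * E q h w" by simp
      have e2: "star q (dlt [Y]) (E q h) (Y#w) = E q h w + q powi 2 * (qint q (1+h) * ?S2)" by simp
      have e3: "E q (h+1) (Y#w) = qint q (2+h) * E q h w" by (simp add: algebra_simps)
      have IH: "(q - inverse q) * qint q h * E q h w = q powi 2 * ?S1 - q powi (-2*h) * ?S2"
        using Cons.IH[of "h-1"] Cons.prems False by (simp add: algebra_simps)
      have pw: "q powi (-2-2*h) * q powi 2 = q powi (-2*h)" "q powi 2 * q powi (2*h) = q powi (2*h+2)"
        by (simp only: pw_mult; simp add: algebra_simps)+
      note sc = sc_Y[of h]
      have sc2: "(q - inverse q) * qint q (2*h+2) = q powi (2*h+2) - q powi (-2-2*h)"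
        using qint_mul[of "2*h+2"] by (simp add: algebra_simps)
      show ?thesis unfolding Y e1 e2 e3 using IH pw sc sc2 by algebra
    qed
  qed
qed

lemma Hid: "g \<ge> 0 \<Longrightarrow> (q - inverse q) * E q g w
   = q powi (2*g+2) * star q (dlt [X]) (Ey q g) w - star q (Ey q g) (dlt [X]) w
     + (q - inverse q) * qint q (1+g) * Ey q (g-1) w + (if g = 0 then (q - inverse q) * dlt [] w else 0)"
proof (induction w arbitrary: g)
  case Nil
  then show ?case by (simp add: dlt_def)
next
  case (Cons a w)
  show ?case
  proof (cases a)
    case X
    let ?S1 = "star q (dlt [X]) (Ey q (g+1)) w"
    let ?S2 = "star q (Ey q (g+1)) (dlt [X]) w"
    have e1: "star q (dlt [X]) (Ey q g) (X#w) = Ey q g w + q powi 2 * (qint q (1+g) * ?S1)" by simp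
    have e2: "star q (Ey q g) (dlt [X]) (X#w) = qint q (1+g) * ?S2 + q powi (-2*(g+1)) * Ey q g w" by simp
    have e3: "E q g (X#w) = qint q (1+g) * E q (g+1) w" by simp
    have e4: "Ey q (g-1) (X#w) = qint q g * Ey q g w" by (simp add: Ey_X)
    have e5: "dlt [] (X#w) = (0::'f)" by (simp add: dlt_def)
    have IH: "(q - inverse q) * E q (g+1) w = q powi (2*g+4) * ?S1 - ?S2 + (q - inverse q) * qint q (2+g) * Ey q g w"
      using Cons.IH[of "g+1"] Cons.prems by (simp add: algebra_simps)
    have pw: "q powi (2*g+2) * q powi 2 = q powi (2*g+4)"
      by (simp only: pw_mult; simp add: algebra_simps)
    have m: "(q - inverse q) * qint q (2*g+2) = q powi (2*g+2) - q powi (-2*(g+1))"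
      using qint_mul[of "2*g+2"] by (simp add: algebra_simps)
    note sc = sc_Y[of g]
    show ?thesis unfolding X e1 e2 e3 e4 e5 using IH pw m sc
      by (simp only: mult_zero_right if_cancel add_0_right) algebra
  next
    case Y
    consider "g = 0" | "g = 1" | "g \<ge> 2" using Cons.prems by linarith
    then show ?thesis
    proof cases
      case 1
      have pw: "q powi 2 * q powi (-2) = 1" by (simp only: pw_mult; simp)
      have e1: "star q (dlt [X]) (Ey q 0) (Y#w) = q powi (-2) * dlt [X] w" by simp
      have e2: "star q (Ey q 0) (dlt [X]) (Y#w) = dlt [X] w" by simp
      have e3: "dlt [] (Y#w) = (0::'f)" by (simp add: dlt_def)
      show ?thesis unfolding Y 1 e1 e2 e3 using pw by simp
    next
      case 2
      let ?S1 = "star q (dlt [X]) (Ey q 0) w"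
      let ?S2 = "star q (Ey q 0) (dlt [X]) w"
      have e1: "star q (dlt [X]) (Ey q 1) (Y#w) = q powi (-2) * (qint q 2 * ?S1)" by (simp add: dl_Ey_Y)
      have e2: "star q (Ey q 1) (dlt [X]) (Y#w) = qint q 2 * ?S2" by (simp add: dl_Ey_Y)
      have e3: "E q 1 (Y#w) = qint q 2 * E q 0 w" by simp
      have e4: "Ey q (1-1) (Y#w) = dlt [] w" by (simp add: Ey_Y0)
      have IH: "(q - inverse q) * E q 0 w = q powi 2 * ?S1 - ?S2 + (q - inverse q) * dlt [] w"
        using Cons.IH[of 0] by simp
      have pw: "q powi 4 * q powi (-2) = q powi 2" by (simp only: pw_mult; simp)
      have n: "(2::int)*1+2 = 4" "(1::int)+1 = 2" "((1::int) = 0) = False" by simp_all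
      show ?thesis unfolding Y 2 e1 e2 e3 e4 n if_False add_0_right using IH pw by algebra
    next
      case 3
      let ?S1 = "star q (dlt [X]) (Ey q (g-1)) w"
      let ?S2 = "star q (Ey q (g-1)) (dlt [X]) w"
      have g0: "g \<noteq> 0" using 3 by simp
      have e1: "star q (dlt [X]) (Ey q g) (Y#w) = q powi (-2) * (qint q (1+g) * ?S1)" using g0 by (simp add: dl_Ey_Y)
      have e2: "star q (Ey q g) (dlt [X]) (Y#w) = qint q (1+g) * ?S2" using g0 by (simp add: dl_Ey_Y)
      have e3: "E q g (Y#w) = qint q (1+g) * E q (g-1) w" by simp
      have e4: "Ey q (g-1) (Y#w) = qint q g * Ey q (g-2) w" using 3 Ey_Y[where g="g-1" and w=w and q=q] by simp
      have IH: "(q - inverse q) * E q (g-1) w = q powi (2*g) * ?S1 - ?S2 + (q - inverse q) * qint q g * Ey q (g-2) w"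
        using Cons.IH[of "g-1"] 3 by (simp add: algebra_simps)
      have pw: "q powi (2*g+2) * q powi (-2) = q powi (2*g)" by (simp only: pw_mult; simp)
      have "(if g = 0 then (q - inverse q) * dlt [] (Y#w) else 0) = 0" using g0 by simp
      then show ?thesis unfolding Y e1 e2 e3 e4 using IH pw
        by (simp only: add_0_right) algebra
    qed
  qed
qed

end

definition R :: "nat \<Rightarrow> (letter list \<Rightarrow> 'f::field) \<Rightarrow> letter list \<Rightarrow> 'f" where
  "R n f = (\<lambda>w. if cx w = n then f w else 0)"

lemma dl_R: "dl X (R (Suc n) f) = R n (dl X f)" "dl X (R 0 f) = (\<lambda>w. 0)" "dl Y (R n f) = R n (dl Y f)"
  by (auto simp: R_def dl_def fun_eq_iff)
lemma tw_R: "tw q a (R n f) = R n (tw q a f)"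
  by (auto simp: R_def tw_def fun_eq_iff)

lemma star_R_supp: "cx w \<noteq> i + j \<Longrightarrow> star q (R i f) (R j g) w = 0"
proof (induction w arbitrary: i j f g)
  case Nil then show ?case by (auto simp: R_def)
next
  case (Cons a w)
  show ?case
  proof (cases a)
    case X
    have t1: "star q (dl X (R i f)) (R j g) w = 0"
    proof (cases i)
      case 0 then show ?thesis by (simp add: dl_R)
    next
      case (Suc i') then show ?thesis using Cons X by (simp add: dl_R)
    qed
    have t2: "star q (tw q X (R i f)) (dl X (R j g)) w = 0"
    proof (cases j)
      case 0 then show ?thesis by (simp add: dl_R)
    next
      case (Suc j') then show ?thesis using Cons X by (simp add: dl_R tw_R)
    qed
    show ?thesis using t1 t2 X by simp
  next
    case Y
    then show ?thesis using Cons by (simp add: dl_R tw_R)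
  qed
qed

lemma star_R_split: "star q f g w = (\<Sum>i\<le>cx w. star q (R i f) (R (cx w - i) g) w)"
proof (induction w arbitrary: f g)
  case Nil then show ?case by (simp add: R_def)
next
  case (Cons a w)
  show ?case
  proof (cases a)
    case Y
    have "star q f g (Y#w) = star q (dl Y f) g w + star q (tw q Y f) (dl Y g) w" by simp
    also have "\<dots> = (\<Sum>i\<le>cx w. star q (R i (dl Y f)) (R (cx w - i) g) w)
        + (\<Sum>i\<le>cx w. star q (R i (tw q Y f)) (R (cx w - i) (dl Y g)) w)"
      by (simp only: Cons.IH[of "dl Y f" g] Cons.IH[of "tw q Y f" "dl Y g"])
    also have "\<dots> = (\<Sum>i\<le>cx w. star q (dl Y (R i f)) (R (cx w - i) g) w
        + star q (tw q Y (R i f)) (dl Y (R (cx w - i) g)) w)"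
      by (simp only: dl_R tw_R sum.distrib)
    also have "\<dots> = (\<Sum>i\<le>cx w. star q (R i f) (R (cx w - i) g) (Y#w))"
      by (simp only: star.simps)
    finally show ?thesis using Y by (simp only: cx_simps)
  next
    case X
    let ?m = "cx w"
    have s1: "star q f g (X#w) = star q (dl X f) g w + star q (tw q X f) (dl X g) w" by simp
    have s2: "star q (dl X f) g w = (\<Sum>i\<le>?m. star q (R i (dl X f)) (R (?m - i) g) w)"
      by (rule Cons.IH)
    have s3: "star q (tw q X f) (dl X g) w = (\<Sum>i\<le>?m. star q (R i (tw q X f)) (R (?m - i) (dl X g)) w)"
      by (rule Cons.IH)
    have s4: "(\<Sum>i\<le>?m. star q (R i (dl X f)) (R (?m - i) g) w)
        = (\<Sum>i\<le>Suc ?m. star q (dl X (R i f)) (R (Suc ?m - i) g) w)"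
      by (simp only: sum.atMost_Suc_shift dl_R star_zero_l diff_Suc_Suc add_0_left)
    have s5: "(\<Sum>i\<le>?m. star q (R i (tw q X f)) (R (?m - i) (dl X g)) w)
        = (\<Sum>i\<le>Suc ?m. star q (tw q X (R i f)) (dl X (R (Suc ?m - i) g)) w)"
    proof -
      have "\<And>i. i \<le> ?m \<Longrightarrow> dl X (R (Suc ?m - i) g) = R (?m - i) (dl X g)"
        by (simp add: Suc_diff_le dl_R)
      then show ?thesis by (simp add: sum.atMost_Suc tw_R dl_R)
    qed
    have s6: "(\<Sum>i\<le>Suc ?m. star q (R i f) (R (Suc ?m - i) g) (X#w))
      = (\<Sum>i\<le>Suc ?m. star q (dl X (R i f)) (R (Suc ?m - i) g) w)
       + (\<Sum>i\<le>Suc ?m. star q (tw q X (R i f)) (dl X (R (Suc ?m - i) g)) w)"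
      by (simp only: star.simps sum.distrib)
    show ?thesis unfolding X cx_simps s6 s1 s2 s3 s4 s5 ..
  qed
qed

lemma R_star: "R m (star q f g) w = (\<Sum>i\<le>m. star q (R i f) (R (m - i) g) w)"
proof (cases "cx w = m")
  case True then show ?thesis using star_R_split[of q f g w] by (simp add: R_def)
next
  case False
  then have "\<And>i. i \<le> m \<Longrightarrow> star q (R i f) (R (m - i) g) w = 0"
    by (intro star_R_supp) simp
  then show ?thesis using False by (simp add: R_def)
qed

context qctx
begin
lemma scLX: "qint q (g+h+3) * q powi (h*(g+1)) = q powi 2 * qint q (1+g) * q powi (h*(g+2))
   + q powi (-2*(g+1)) * qint q (2+h) * q powi ((h+1)*(g+1))"
proof -
  obtain z zi u ui v r D where z: "z = q powi h" and zi: "zi = inverse z" and u: "u = q powi g"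
    and ui: "ui = inverse u" and v: "v = q powi (h*g)" and r: "r = inverse q" and D: "D = q - inverse q" by simp
  have z0: "z \<noteq> 0" "u \<noteq> 0" using q0 z u by simp_all
  have qr: "q*r = 1" using q0 r by simp
  have zz: "z*zi = 1" "u*ui = 1" using z0 zi ui by simp_all
  have D1: "D \<noteq> 0" using D D0 by simp
  have p1: "q powi (h*(g+1)) = v*z" unfolding v z using q0
    by (simp add: power_int_add[symmetric] algebra_simps)
  have p2: "q powi (h*(g+2)) = v*z^2" unfolding v z using q0
    by (simp add: power_int_add[symmetric] algebra_simps power_int_mult_distrib power2_eq_square)
  have p3: "q powi ((h+1)*(g+1)) = v*z*u*q"
  proof -
    have "(h+1)*(g+1) = h*g + h + g + 1" by algebra
    then show ?thesis unfolding v z u using q0 by (simp add: power_int_add)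
  qed
  have p4: "q powi (-2*(g+1)) = ui^2*r^2"
  proof -
    have "-2*(g+1) = (-g) + (-g) + (-2)" by algebra
    then show ?thesis unfolding ui u r by (simp only: pw_add' pw_neg) (simp add: power2_eq_square)
  qed
  have p5: "q powi 2 = q^2" by simp
  have a1: "qint q (g+h+3) = (u*z*q^3 - ui*zi*r^3)/D" unfolding D
    by (rule qint_ex) (simp_all add: z zi u ui r power_int_add q0 power_inverse)
  have a2: "qint q (1+g) = (q*u - r*ui)/D" unfolding D
    by (rule qint_ex) (simp_all add: u ui r power_int_add q0)
  have a3: "qint q (2+h) = (q^2*z - r^2*zi)/D" unfolding D
    by (rule qint_ex) (simp_all add: z zi r power_int_add q0 power_inverse)
  have "(u*z*q^3 - ui*zi*r^3) * (v*z) = q^2 * (q*u - r*ui) * (v*z^2) + ui^2*r^2 * (q^2*z - r^2*zi) * (v*z*u*q)"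
    using qr zz by algebra
  then show ?thesis unfolding a1 a2 a3 p1 p2 p3 p4 p5 using D1
    apply (simp add: field_simps) by algebra
qed

lemma scLY: "qint q (g+h+1) * q powi (h*(g+1)) = qint q (1+g) * q powi (h*g) + q powi (2*(g+1)) * qint q h * q powi ((h-1)*(g+1))"
proof -
  obtain z zi u ui v r D where z: "z = q powi h" and zi: "zi = inverse z" and u: "u = q powi g"
    and ui: "ui = inverse u" and v: "v = q powi (h*g)" and r: "r = inverse q" and D: "D = q - inverse q" by simp
  have z0: "z \<noteq> 0" "u \<noteq> 0" using q0 z u by simp_all
  have qr: "q*r = 1" using q0 r by simp
  have zz: "z*zi = 1" "u*ui = 1" using z0 zi ui by simp_all
  have D1: "D \<noteq> 0" using D D0 by simp
  have p0: "q powi (h*(g+1)) = v*z"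
  proof -
    have "h*(g+1) = h*g + h" by (simp add: algebra_simps)
    then show ?thesis unfolding v z u zi ui r by (simp only: pw_add' pw_neg; simp add: power2_eq_square power_inverse)
  qed
  have p1: "q powi (h*g) = v"
  proof -
    have "h*g = h*g" by (simp add: algebra_simps)
    then show ?thesis unfolding v z u zi ui r by (simp only: pw_add' pw_neg; simp add: power2_eq_square power_inverse)
  qed
  have p2: "q powi (2*(g+1)) = u*u*q^2"
  proof -
    have "2*(g+1) = g+g+2" by (simp add: algebra_simps)
    then show ?thesis unfolding v z u zi ui r by (simp only: pw_add' pw_neg; simp add: power2_eq_square power_inverse)
  qed
  have p3: "q powi ((h-1)*(g+1)) = v*z*ui*r"
  proof -
    have "(h-1)*(g+1) = h*g + h + (-g) + (-1)" by (simp add: algebra_simps)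
    then show ?thesis unfolding v z u zi ui r by (simp only: pw_add' pw_neg; simp add: power2_eq_square power_inverse)
  qed
  have a0: "qint q (g+h+1) = (u*z*q - ui*zi*r)/D" unfolding D
    by (rule qint_ex) (simp_all add: z zi u ui v r pw_add' power_inverse)
  have a1: "qint q (1+g) = (q*u - r*ui)/D" unfolding D
    by (rule qint_ex) (simp_all add: z zi u ui v r pw_add' power_inverse)
  have a2: "qint q (h) = (z - zi)/D" unfolding D
    by (rule qint_ex) (simp_all add: z zi u ui v r pw_add' power_inverse)
  have "(u*z*q - ui*zi*r) * (v*z) = (q*u - r*ui) * v + (u*u*q^2) * (z - zi) * (v*z*ui*r)"
    using qr zz by (algebra | simp add: algebra_simps)
  then show ?thesis unfolding p0 p1 p2 p3 a0 a1 a2 using D1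
    by (simp add: field_simps; algebra)
qed

lemma scMX: "qint q (g+h+3) * q powi (h*(g+1)) = qint q (2+h) * q powi ((h+1)*(g+1)) + q powi (-2*h) * q powi (-2) * qint q (1+g) * q powi (h*(g+2))"
proof -
  obtain z zi u ui v r D where z: "z = q powi h" and zi: "zi = inverse z" and u: "u = q powi g"
    and ui: "ui = inverse u" and v: "v = q powi (h*g)" and r: "r = inverse q" and D: "D = q - inverse q" by simp
  have z0: "z \<noteq> 0" "u \<noteq> 0" using q0 z u by simp_all
  have qr: "q*r = 1" using q0 r by simp
  have zz: "z*zi = 1" "u*ui = 1" using z0 zi ui by simp_all
  have D1: "D \<noteq> 0" using D D0 by simp
  have p0: "q powi (h*(g+1)) = v*z"
  proof -
    have "h*(g+1) = h*g + h" by (simp add: algebra_simps)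
    then show ?thesis unfolding v z u zi ui r by (simp only: pw_add' pw_neg; simp add: power2_eq_square power_inverse)
  qed
  have p1: "q powi ((h+1)*(g+1)) = v*z*u*q"
  proof -
    have "(h+1)*(g+1) = h*g + h + g + 1" by (simp add: algebra_simps)
    then show ?thesis unfolding v z u zi ui r by (simp only: pw_add' pw_neg; simp add: power2_eq_square power_inverse)
  qed
  have p2: "q powi (-2*h) = zi*zi"
  proof -
    have "-2*h = (-h) + (-h)" by (simp add: algebra_simps)
    then show ?thesis unfolding v z u zi ui r by (simp only: pw_add' pw_neg; simp add: power2_eq_square power_inverse)
  qed
  have p3: "q powi (-2) = r^2"
  proof -
    have "-2 = -2" by (simp add: algebra_simps)
    then show ?thesis unfolding v z u zi ui r by (simp only: pw_add' pw_neg; simp add: power2_eq_square power_inverse)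
  qed
  have p4: "q powi (h*(g+2)) = v*z*z"
  proof -
    have "h*(g+2) = h*g+h+h" by (simp add: algebra_simps)
    then show ?thesis unfolding v z u zi ui r by (simp only: pw_add' pw_neg; simp add: power2_eq_square power_inverse)
  qed
  have a0: "qint q (g+h+3) = (u*z*q^3 - ui*zi*r^3)/D" unfolding D
    by (rule qint_ex) (simp_all add: z zi u ui v r pw_add' power_inverse)
  have a1: "qint q (2+h) = (q^2*z - r^2*zi)/D" unfolding D
    by (rule qint_ex) (simp_all add: z zi u ui v r pw_add' power_inverse)
  have a2: "qint q (1+g) = (q*u - r*ui)/D" unfolding D
    by (rule qint_ex) (simp_all add: z zi u ui v r pw_add' power_inverse)
  have "(u*z*q^3 - ui*zi*r^3) * (v*z) = (q^2*z - r^2*zi) * (v*z*u*q) + (zi*zi) * r^2 * (q*u - r*ui) * (v*z*z)"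
    using qr zz by (algebra | simp add: algebra_simps)
  then show ?thesis unfolding p0 p1 p2 p3 p4 a0 a1 a2 using D1
    by (simp add: field_simps; algebra)
qed

lemma scMY: "qint q (g+h+1) * q powi (h*(g+1)) = qint q h * q powi ((h-1)*(g+1)) + q powi (2*h) * qint q (1+g) * q powi (h*g)"
proof -
  obtain z zi u ui v r D where z: "z = q powi h" and zi: "zi = inverse z" and u: "u = q powi g"
    and ui: "ui = inverse u" and v: "v = q powi (h*g)" and r: "r = inverse q" and D: "D = q - inverse q" by simp
  have z0: "z \<noteq> 0" "u \<noteq> 0" using q0 z u by simp_all
  have qr: "q*r = 1" using q0 r by simp
  have zz: "z*zi = 1" "u*ui = 1" using z0 zi ui by simp_all
  have D1: "D \<noteq> 0" using D D0 by simp
  have p0: "q powi (h*(g+1)) = v*z"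
  proof -
    have "h*(g+1) = h*g + h" by (simp add: algebra_simps)
    then show ?thesis unfolding v z u zi ui r by (simp only: pw_add' pw_neg; simp add: power2_eq_square power_inverse)
  qed
  have p1: "q powi ((h-1)*(g+1)) = v*z*ui*r"
  proof -
    have "(h-1)*(g+1) = h*g + h + (-g) + (-1)" by (simp add: algebra_simps)
    then show ?thesis unfolding v z u zi ui r by (simp only: pw_add' pw_neg; simp add: power2_eq_square power_inverse)
  qed
  have p2: "q powi (2*h) = z*z"
  proof -
    have "2*h = h+h" by (simp add: algebra_simps)
    then show ?thesis unfolding v z u zi ui r by (simp only: pw_add' pw_neg; simp add: power2_eq_square power_inverse)
  qed
  have p3: "q powi (h*g) = v"
  proof -
    have "h*g = h*g" by (simp add: algebra_simps)
    then show ?thesis unfolding v z u zi ui r by (simp only: pw_add' pw_neg; simp add: power2_eq_square power_inverse)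
  qed
  have a0: "qint q (g+h+1) = (u*z*q - ui*zi*r)/D" unfolding D
    by (rule qint_ex) (simp_all add: z zi u ui v r pw_add' power_inverse)
  have a1: "qint q (h) = (z - zi)/D" unfolding D
    by (rule qint_ex) (simp_all add: z zi u ui v r pw_add' power_inverse)
  have a2: "qint q (1+g) = (q*u - r*ui)/D" unfolding D
    by (rule qint_ex) (simp_all add: z zi u ui v r pw_add' power_inverse)
  have "(u*z*q - ui*zi*r) * (v*z) = (z - zi) * (v*z*ui*r) + (z*z) * (q*u - r*ui) * v"
    using qr zz by (algebra | simp add: algebra_simps)
  then show ?thesis unfolding p0 p1 p2 p3 a0 a1 a2 using D1
    by (simp add: field_simps; algebra)
qed

end

context qctx
begin
lemma Lid: "g \<ge> 0 \<Longrightarrow> h \<ge> 0 \<Longrightarrow> qint q (1+h) * q powi (h*(g+1)) * E q (g+h+1) w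
    = qint q (g+h+2) * star q (SEy q (q powi 2) g) (E q h) w"
proof (induction w arbitrary: g h)
  case Nil then show ?case by (simp add: SEy_def)
next
  case (Cons a w)
  show ?case
  proof (cases a)
    case X
    let ?T1 = "star q (SEy q (q powi 2) (g+1)) (E q h) w"
    let ?T2 = "star q (SEy q (q powi 2) g) (E q (h+1)) w"
    have e1: "star q (SEy q (q powi 2) g) (E q h) (X#w)
        = (q powi 2 * qint q (1+g)) * ?T1 + q powi (-2*(g+1)) * (qint q (1+h) * ?T2)" by simp
    have e2: "E q (g+h+1) (X#w) = qint q (g+h+2) * E q (g+h+2) w" by (simp add: algebra_simps)
    have F1: "qint q (1+h) * q powi (h*(g+2)) * E q (g+h+2) w = qint q (g+h+3) * ?T1"
      using Cons.IH[of "g+1" h] Cons.prems by (simp add: algebra_simps)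
    have F2: "qint q (2+h) * q powi ((h+1)*(g+1)) * E q (g+h+2) w = qint q (g+h+3) * ?T2"
      using Cons.IH[of g "h+1"] Cons.prems by (simp add: algebra_simps)
    note sc = scLX[of g h]
    have "qint q (g+h+3) * (qint q (1+h) * q powi (h*(g+1)) * E q (g+h+1) (X#w))
        = qint q (g+h+3) * (qint q (g+h+2) * star q (SEy q (q powi 2) g) (E q h) (X#w))"
      unfolding e1 e2 using F1 F2 sc by algebra
    moreover have "qint q (g+h+3) \<noteq> 0" using qnz Cons.prems by simp
    ultimately show ?thesis unfolding X by simp
  next
    case Y
    define T1 where "T1 = (if g = 0 then E q h w else star q (SEy q (q powi 2) (g-1)) (E q h) w)"
    define T2 where "T2 = star q (SEy q (q powi 2) g) (E q (h-1)) w"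
    have e1: "star q (SEy q (q powi 2) g) (E q h) (Y#w)
        = qint q (1+g) * T1 + q powi (2*(g+1)) * (qint q (1+h) * T2)"
      by (cases "g = 0") (simp_all add: T1_def T2_def dl_SEy_Y)
    have e2: "E q (g+h+1) (Y#w) = qint q (g+h+2) * E q (g+h) w" by (simp add: algebra_simps)
    have F1: "qint q (1+h) * q powi (h*g) * E q (g+h) w = qint q (g+h+1) * T1"
    proof (cases "g = 0")
      case True then show ?thesis by (simp add: T1_def algebra_simps)
    next
      case False then show ?thesis
        using Cons.IH[of "g-1" h] Cons.prems by (simp add: T1_def algebra_simps)
    qed
    have F2: "qint q h * q powi ((h-1)*(g+1)) * E q (g+h) w = qint q (g+h+1) * T2"
    proof (cases "h = 0")
      case True then show ?thesis by (simp add: T2_def)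
    next
      case False then show ?thesis
        using Cons.IH[of g "h-1"] Cons.prems by (simp add: T2_def algebra_simps)
    qed
    note sc = scLY[of g h]
    have "qint q (g+h+1) * (qint q (1+h) * q powi (h*(g+1)) * E q (g+h+1) (Y#w))
        = qint q (g+h+1) * (qint q (g+h+2) * star q (SEy q (q powi 2) g) (E q h) (Y#w))"
      unfolding e1 e2 using F1 F2 sc by algebra
    moreover have "qint q (g+h+1) \<noteq> 0" using qnz Cons.prems by simp
    ultimately show ?thesis unfolding Y by simp
  qed
qed

lemma Mid: "g \<ge> 0 \<Longrightarrow> h \<ge> 0 \<Longrightarrow> qint q (1+h) * q powi (h*(g+1)) * E q (g+h+1) w
    = qint q (g+h+2) * star q (E q h) (SEy q (q powi (-2)) g) w"
proof (induction w arbitrary: g h)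
  case Nil then show ?case by (simp add: SEy_def)
next
  case (Cons a w)
  show ?case
  proof (cases a)
    case X
    let ?T1 = "star q (E q h) (SEy q (q powi (-2)) (g+1)) w"
    let ?T2 = "star q (E q (h+1)) (SEy q (q powi (-2)) g) w"
    have e1: "star q (E q h) (SEy q (q powi (-2)) g) (X#w)
        = qint q (1+h) * ?T2 + q powi (-2*h) * ((q powi (-2) * qint q (1+g)) * ?T1)" by simp
    have e2: "E q (g+h+1) (X#w) = qint q (g+h+2) * E q (g+h+2) w" by (simp add: algebra_simps)
    have F1: "qint q (1+h) * q powi (h*(g+2)) * E q (g+h+2) w = qint q (g+h+3) * ?T1"
      using Cons.IH[of "g+1" h] Cons.prems by (simp add: algebra_simps)
    have F2: "qint q (2+h) * q powi ((h+1)*(g+1)) * E q (g+h+2) w = qint q (g+h+3) * ?T2"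
      using Cons.IH[of g "h+1"] Cons.prems by (simp add: algebra_simps)
    note sc = scMX[of g h]
    have "qint q (g+h+3) * (qint q (1+h) * q powi (h*(g+1)) * E q (g+h+1) (X#w))
        = qint q (g+h+3) * (qint q (g+h+2) * star q (E q h) (SEy q (q powi (-2)) g) (X#w))"
      unfolding e1 e2 using F1 F2 sc by algebra
    moreover have "qint q (g+h+3) \<noteq> 0" using qnz Cons.prems by simp
    ultimately show ?thesis unfolding X by simp
  next
    case Y
    define T1 where "T1 = (if g = 0 then E q h w else star q (E q h) (SEy q (q powi (-2)) (g-1)) w)"
    define T2 where "T2 = star q (E q (h-1)) (SEy q (q powi (-2)) g) w"
    have e1: "star q (E q h) (SEy q (q powi (-2)) g) (Y#w)
        = qint q (1+h) * T2 + q powi (2*h) * (qint q (1+g) * T1)"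
      by (cases "g = 0") (simp_all add: T1_def T2_def dl_SEy_Y)
    have e2: "E q (g+h+1) (Y#w) = qint q (g+h+2) * E q (g+h) w" by (simp add: algebra_simps)
    have F1: "qint q (1+h) * q powi (h*g) * E q (g+h) w = qint q (g+h+1) * T1"
    proof (cases "g = 0")
      case True then show ?thesis by (simp add: T1_def algebra_simps)
    next
      case False then show ?thesis
        using Cons.IH[of "g-1" h] Cons.prems by (simp add: T1_def algebra_simps)
    qed
    have F2: "qint q h * q powi ((h-1)*(g+1)) * E q (g+h) w = qint q (g+h+1) * T2"
    proof (cases "h = 0")
      case True then show ?thesis by (simp add: T2_def)
    next
      case False then show ?thesis
        using Cons.IH[of g "h-1"] Cons.prems by (simp add: T2_def algebra_simps)
    qed
    note sc = scMY[of g h]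
    have "qint q (g+h+1) * (qint q (1+h) * q powi (h*(g+1)) * E q (g+h+1) (Y#w))
        = qint q (g+h+1) * (qint q (g+h+2) * star q (E q h) (SEy q (q powi (-2)) g) (Y#w))"
      unfolding e1 e2 using F1 F2 sc by algebra
    moreover have "qint q (g+h+1) \<noteq> 0" using qnz Cons.prems by simp
    ultimately show ?thesis unfolding Y by simp
  qed
qed

end

context qctx
begin
lemma NE_X: "NE q h (X # w) = qint q (1+h) * NE q (h+1) w + qint q (1+h) * E q (h+1) w"
  using fun_cong[OF dl_NE(1)[of q h], of w] by (simp add: dl_def)
lemma NE_Y: "NE q h (Y # w) = qint q (1+h) * NE q (h-1) w"
  using fun_cong[OF dl_NE(2)[of q h], of w] by (simp add: dl_def)

lemma Iid: "h \<ge> 0 \<Longrightarrow> (q - inverse q) * NE q h w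
    = star q (SP q (q powi 2)) (E q h) w - star q (E q h) (SP q (q powi (-2))) w"
proof (induction w arbitrary: h)
  case Nil then show ?case by (simp add: NE_def SP_def P_def)
next
  case (Cons a w)
  show ?case
  proof (cases a)
    case X
    let ?A1 = "star q (SEy q (q powi 2) 0) (E q h) w"
    let ?A2 = "star q (E q h) (SEy q (q powi (-2)) 0) w"
    let ?B1 = "star q (SP q (q powi 2)) (E q (h+1)) w"
    let ?B2 = "star q (E q (h+1)) (SP q (q powi (-2))) w"
    have e1: "star q (SP q (q powi 2)) (E q h) (X#w) = q powi 2 * ?A1 + qint q (1+h) * ?B1" by simp
    have e2: "star q (E q h) (SP q (q powi (-2))) (X#w) = qint q (1+h) * ?B2 + q powi (-2*h) * (q powi (-2) * ?A2)" by simp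
    have IH: "(q - inverse q) * NE q (h+1) w = ?B1 - ?B2" using Cons.IH[of "h+1"] Cons.prems by simp
    have L: "qint q (1+h) * q powi h * E q (h+1) w = qint q (2+h) * ?A1"
      using Lid[of 0 h w] Cons.prems by (simp add: algebra_simps)
    have M: "qint q (1+h) * q powi h * E q (h+1) w = qint q (2+h) * ?A2"
      using Mid[of 0 h w] Cons.prems by (simp add: algebra_simps)
    have sc: "(q - inverse q) * qint q (2+h) = q powi (2+h) - q powi (-(2+h))"
      using qint_mul[of "2+h"] by simp
    have p1: "q powi 2 * q powi h = q powi (2+h)" by (simp only: pw_mult)
    have ex: "-2*h + -2 + h = -(2+h)" by simp
    have p2: "q powi (-2*h) * q powi (-2) * q powi h = q powi (-(2+h))" by (simp only: pw_mult ex)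
    have "qint q (2+h) * ((q - inverse q) * NE q h (X#w))
        = qint q (2+h) * (star q (SP q (q powi 2)) (E q h) (X#w) - star q (E q h) (SP q (q powi (-2))) (X#w))"
      unfolding e1 e2 NE_X using IH L M sc p1 p2 by algebra
    moreover have "qint q (2+h) \<noteq> 0" using qnz Cons.prems by simp
    ultimately show ?thesis unfolding X by simp
  next
    case Y
    show ?thesis
    proof (cases "h = 0")
      case True then show ?thesis unfolding Y by (simp add: NE_Y NE_def)
    next
      case False
      have IH: "(q - inverse q) * NE q (h-1) w = star q (SP q (q powi 2)) (E q (h-1)) w - star q (E q (h-1)) (SP q (q powi (-2))) w"
        using Cons.IH[of "h-1"] Cons.prems False by simp
      have e1: "star q (SP q (q powi 2)) (E q h) (Y#w) = qint q (1+h) * star q (SP q (q powi 2)) (E q (h-1)) w" by simp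
      have e2: "star q (E q h) (SP q (q powi (-2))) (Y#w) = qint q (1+h) * star q (E q (h-1)) (SP q (q powi (-2))) w" by simp
      show ?thesis unfolding Y NE_Y e1 e2 using IH by algebra
    qed
  qed
qed

lemma id2: "(q - inverse q) * (E q 0 w - dlt [] w) = q powi 2 * star q (A q) (dlt [Y]) w - star q (dlt [Y]) (A q) w"
proof (cases w)
  case Nil then show ?thesis by (simp add: dlt_def A_def)
next
  case (Cons a u)
  show ?thesis
  proof (cases a)
    case X
    have e1: "star q (A q) (dlt [Y]) (X#u) = star q (E q 0) (dlt [Y]) u" by simp
    have e2: "star q (dlt [Y]) (A q) (X#u) = q powi (-2) * star q (dlt [Y]) (E q 0) u" by simp
    have e3: "E q 0 (X#u) = E q 1 u" by simp
    have e4: "dlt [] (X#u) = (0::'f)" by (simp add: dlt_def)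
    have Y0: "(q - inverse q) * E q 1 u = q powi 2 * star q (E q 0) (dlt [Y]) u - q powi (-2) * star q (dlt [Y]) (E q 0) u"
      using Yid[of 0 u] by simp
    show ?thesis unfolding Cons X e1 e2 e3 e4 using Y0 by simp
  next
    case Y
    have e1: "star q (A q) (dlt [Y]) (Y#u) = q powi (-2) * A q u" by simp
    have e2: "star q (dlt [Y]) (A q) (Y#u) = A q u" by simp
    have e4: "dlt [] (Y#u) = (0::'f)" by (simp add: dlt_def)
    have pw: "q powi 2 * q powi (-2) = 1" by (simp only: pw_mult; simp)
    show ?thesis unfolding Cons Y e1 e2 e4 using pw by (simp add: mult.assoc[symmetric])
  qed
qed

lemma id1: "(q - inverse q) * (A q w - dlt [X] w) = star q (dlt [X]) (P q) w - star q (P q) (dlt [X]) w"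
proof (cases w)
  case Nil then show ?thesis by (simp add: dlt_def A_def P_def)
next
  case (Cons a u)
  show ?thesis
  proof (cases a)
    case X
    have e1: "star q (dlt [X]) (P q) (X#u) = P q u + q powi 2 * star q (dlt [X]) (Ey q 0) u" by simp
    have e2: "star q (P q) (dlt [X]) (X#u) = star q (Ey q 0) (dlt [X]) u + P q u" by simp
    have e3: "A q (X#u) = E q 0 u" by (simp add: A_def)
    have e4: "dlt [X] (X#u) = (dlt [] u :: 'f)" by (simp add: dlt_def)
    have H0: "(q - inverse q) * E q 0 u = q powi 2 * star q (dlt [X]) (Ey q 0) u - star q (Ey q 0) (dlt [X]) u + (q - inverse q) * dlt [] u"
      using Hid[of 0 u] by simp
    show ?thesis unfolding Cons X e1 e2 e3 e4 using H0 by (simp add: algebra_simps)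
  next
    case Y
    have e1: "star q (dlt [X]) (P q) (Y#u) = 0" by simp
    have e2: "star q (P q) (dlt [X]) (Y#u) = 0" by simp
    show ?thesis unfolding Cons Y e1 e2 by (simp add: A_def dlt_def)
  qed
qed

end

lemma lookup_lcons:
  fixes p :: "'f::field vec"
  shows "Poly_Mapping.lookup (lcons a p) w = (case w of [] \<Rightarrow> 0 | b # u \<Rightarrow> if b = a then Poly_Mapping.lookup p u else 0)"
proof -
  have "Poly_Mapping.lookup (lcons a p) w = (\<Sum>u\<in>Poly_Mapping.keys p. (Poly_Mapping.lookup p u when a # u = w))"
    unfolding lcons_def by (simp add: lookup_sum lookup_single)
  also have "\<dots> = (case w of [] \<Rightarrow> 0 | b # u \<Rightarrow> if b = a then Poly_Mapping.lookup p u else 0)"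
  proof (cases w)
    case Nil then show ?thesis by (simp add: when_def)
  next
    case (Cons b u)
    have "(\<Sum>v\<in>Poly_Mapping.keys p. (Poly_Mapping.lookup p v when a # v = w)) = (\<Sum>v\<in>Poly_Mapping.keys p. if v = u then (if b = a then Poly_Mapping.lookup p v else 0) else 0)"
      by (rule sum.cong) (auto simp: when_def Cons)
    also have "\<dots> = (if b = a then Poly_Mapping.lookup p u else 0)"
      by (auto simp: in_keys_iff)
    finally show ?thesis using Cons by simp
  qed
  finally show ?thesis .
qed

lemma lookup_smul: "Poly_Mapping.lookup (smul c p) w = c * Poly_Mapping.lookup p w"
  by (simp add: smul_def Poly_Mapping.map.rep_eq when_def)

lemma dl_dlt_Cons: "dl b (dlt (a # u)) = (if a = b then dlt u else (\<lambda>w. 0))"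
  by (auto simp: dl_def dlt_def fun_eq_iff)

lemma tw_dlt_gen: "tw q b (dlt u) = (\<lambda>w. q powi (\<Sum>d\<leftarrow>u. lpair d b) * dlt u w)"
  by (auto simp: tw_def dlt_def fun_eq_iff)

lemma lookup_wshuffle: "Poly_Mapping.lookup (wshuffle q u v) w = star q (dlt u) (dlt v) w"
proof (induction w arbitrary: u v)
  case Nil
  show ?case
  proof (cases u)
    case Nil then show ?thesis by (auto simp: lookup_single when_def dlt_def)
  next
    case (Cons a u')
    then show ?thesis
      by (cases v) (auto simp: lookup_single when_def dlt_def lookup_add lookup_smul lookup_lcons)
  qed
next
  case (Cons b w)
  show ?case
  proof (cases u)
    case Nil
    have "star q (dlt []) (dlt v) (b # w) = dlt v (b # w)" by (rule star_unit_l)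
    then show ?thesis using Nil by (auto simp: lookup_single when_def dlt_def)
  next
    case (Cons a u')
    show ?thesis
    proof (cases v)
      case Nil
      have "star q (dlt u) (dlt []) (b # w) = dlt u (b # w)" by (rule star_unit_r)
      then show ?thesis using Cons Nil by (auto simp: lookup_single when_def dlt_def)
    next
      case (Cons c v')
      have "Poly_Mapping.lookup (wshuffle q u v) (b # w)
          = (if b = a then Poly_Mapping.lookup (wshuffle q u' v) w else 0)
            + q powi (\<Sum>d\<leftarrow>u. lpair d c) * (if b = c then Poly_Mapping.lookup (wshuffle q u v') w else 0)"
        using \<open>u = a # u'\<close> Cons by (simp add: lookup_add lookup_smul lookup_lcons)
      also have "\<dots> = star q (dlt u) (dlt v) (b # w)"
        using \<open>u = a # u'\<close> Cons by (simp add: Cons.IH dl_dlt_Cons tw_dlt_gen)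
      finally show ?thesis .
    qed
  qed
qed

lemma star_sum_l: "finite S \<Longrightarrow> star q (\<lambda>w. \<Sum>i\<in>S. c i * F i w) g w = (\<Sum>i\<in>S. c i * star q (F i) g w)"
proof (induction S rule: finite_induct)
  case empty then show ?case by simp
next
  case (insert x S)
  have "star q (\<lambda>w. \<Sum>i\<in>insert x S. c i * F i w) g w = star q (\<lambda>w. c x * F x w + (\<Sum>i\<in>S. c i * F i w)) g w"
    using insert by simp
  also have "\<dots> = c x * star q (F x) g w + star q (\<lambda>w. \<Sum>i\<in>S. c i * F i w) g w"
    by (simp only: star_add_l star_scale_l)
  finally show ?case using insert by simp
qed

lemma star_sum_r: "finite S \<Longrightarrow> star q f (\<lambda>w. \<Sum>i\<in>S. c i * G i w) w = (\<Sum>i\<in>S. c i * star q f (G i) w)"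
proof (induction S rule: finite_induct)
  case empty then show ?case by simp
next
  case (insert x S)
  have "star q f (\<lambda>w. \<Sum>i\<in>insert x S. c i * G i w) w = star q f (\<lambda>w. c x * G x w + (\<Sum>i\<in>S. c i * G i w)) w"
    using insert by simp
  also have "\<dots> = c x * star q f (G x) w + star q f (\<lambda>w. \<Sum>i\<in>S. c i * G i w) w"
    by (simp only: star_add_r star_scale_r)
  finally show ?case using insert by simp
qed

lemma lookup_as_sum: "Poly_Mapping.lookup f = (\<lambda>w. \<Sum>u\<in>Poly_Mapping.keys f. Poly_Mapping.lookup f u * dlt u w)"
proof
  fix w
  have "(\<Sum>u\<in>Poly_Mapping.keys f. Poly_Mapping.lookup f u * dlt u w)
     = (\<Sum>u\<in>Poly_Mapping.keys f. if u = w then Poly_Mapping.lookup f w else 0)"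
    by (rule sum.cong) (auto simp: dlt_def)
  also have "\<dots> = Poly_Mapping.lookup f w" by (auto simp: in_keys_iff)
  finally show "Poly_Mapping.lookup f w = (\<Sum>u\<in>Poly_Mapping.keys f. Poly_Mapping.lookup f u * dlt u w)" ..
qed

lemma lookup_qshuffle:
  fixes f g :: "'f::field vec"
  shows "Poly_Mapping.lookup (qshuffle q f g) w = star q (Poly_Mapping.lookup f) (Poly_Mapping.lookup g) w"
proof -
  have "Poly_Mapping.lookup (qshuffle q f g) w = (\<Sum>u\<in>Poly_Mapping.keys f. \<Sum>v\<in>Poly_Mapping.keys g.
      Poly_Mapping.lookup f u * (Poly_Mapping.lookup g v * star q (dlt u) (dlt v) w))"
    unfolding qshuffle_def by (simp add: lookup_sum lookup_smul lookup_wshuffle mult.assoc)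
  also have "\<dots> = (\<Sum>u\<in>Poly_Mapping.keys f. Poly_Mapping.lookup f u * star q (dlt u) (Poly_Mapping.lookup g) w)"
    by (subst (2) lookup_as_sum) (simp add: star_sum_r sum_distrib_left)
  also have "\<dots> = star q (Poly_Mapping.lookup f) (Poly_Mapping.lookup g) w"
    by (subst (2) lookup_as_sum) (simp add: star_sum_l)
  finally show ?thesis .
qed

definition inU :: "'f::field \<Rightarrow> (letter list \<Rightarrow> 'f) \<Rightarrow> bool" where
  "inU q F \<longleftrightarrow> (\<exists>p \<in> Ualg q. Poly_Mapping.lookup p = F)"

lemma inU_add: "inU q F \<Longrightarrow> inU q G \<Longrightarrow> inU q (\<lambda>w. F w + G w)"
  unfolding inU_def by (metis Ualg.add lookup_add)
lemma inU_scale: "inU q F \<Longrightarrow> inU q (\<lambda>w. c * F w)"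
  unfolding inU_def using Ualg.smul lookup_smul by metis
lemma inU_star: "inU q F \<Longrightarrow> inU q G \<Longrightarrow> inU q (star q F G)"
proof -
  assume "inU q F" "inU q G"
  then obtain p1 p2 where p: "p1 \<in> Ualg q" "p2 \<in> Ualg q" "Poly_Mapping.lookup p1 = F" "Poly_Mapping.lookup p2 = G"
    unfolding inU_def by blast
  have "qshuffle q p1 p2 \<in> Ualg q" using p by (simp add: Ualg.mult)
  moreover have "Poly_Mapping.lookup (qshuffle q p1 p2) = star q (Poly_Mapping.lookup p1) (Poly_Mapping.lookup p2)"
    by (rule ext) (rule lookup_qshuffle)
  then have "Poly_Mapping.lookup (qshuffle q p1 p2) = star q F G" using p(3,4) by simp
  ultimately show ?thesis unfolding inU_def by blast
qed
lemma inU_one: "inU (q::'f::field) (dlt [])"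
proof -
  have "Poly_Mapping.lookup (Poly_Mapping.single [] (1::'f)) = dlt []"
    by (auto simp: lookup_single when_def dlt_def fun_eq_iff)
  then show ?thesis unfolding inU_def using Ualg.one by blast
qed
lemma inU_x: "inU (q::'f::field) (dlt [X])"
proof -
  have "Poly_Mapping.lookup (Poly_Mapping.single [X] (1::'f)) = dlt [X]"
    by (auto simp: lookup_single when_def dlt_def fun_eq_iff)
  then show ?thesis unfolding inU_def using Ualg.genx by blast
qed
lemma inU_y: "inU (q::'f::field) (dlt [Y])"
proof -
  have "Poly_Mapping.lookup (Poly_Mapping.single [Y] (1::'f)) = dlt [Y]"
    by (auto simp: lookup_single when_def dlt_def fun_eq_iff)
  then show ?thesis unfolding inU_def using Ualg.geny by blast
qed
lemma inU_zero: "inU q (\<lambda>w. 0)"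
  using inU_scale[OF inU_one, of q 0] by simp
lemma inU_sum: "finite S \<Longrightarrow> (\<And>i. i \<in> S \<Longrightarrow> inU q (F i)) \<Longrightarrow> inU q (\<lambda>w. \<Sum>i\<in>S. F i w)"
proof (induction S rule: finite_induct)
  case empty then show ?case using inU_zero by simp
next
  case (insert x S)
  then have "inU q (\<lambda>w. F x w + (\<Sum>i\<in>S. F i w))" by (intro inU_add) auto
  then show ?case using insert by simp
qed

lemma letter_UNIV: "(UNIV :: letter set) = {X, Y}"
  using letter.exhaust by auto

lemma finite_cat_set: "finite {w. length w = 2 * n \<and> catalan w}"
proof -
  have "finite {w :: letter list. set w \<subseteq> UNIV \<and> length w = 2 * n}"
    by (rule finite_lists_length_eq) (simp add: letter_UNIV)
  then show ?thesis by (rule rev_finite_subset) auto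
qed

lemma lookup_Cat: "Poly_Mapping.lookup (Cat q n) u = (if length u = 2 * n \<and> catalan u then catcoeff q u else 0)"
proof -
  have "Poly_Mapping.lookup (Cat q n) u = (\<Sum>w\<in>{w. length w = 2 * n \<and> catalan w}. (catcoeff q w when w = u))"
    unfolding Cat_def by (simp add: lookup_sum lookup_single)
  also have "\<dots> = (\<Sum>w\<in>{w. length w = 2 * n \<and> catalan w}. if w = u then catcoeff q u else 0)"
    by (rule sum.cong) (auto simp: when_def)
  also have "\<dots> = (if length u = 2 * n \<and> catalan u then catcoeff q u else 0)"
    using finite_cat_set[of n] by (simp add: sum.delta')
  finally show ?thesis .
qed

lemma ht_nth: "ht u = (\<Sum>j<length u. lbar (u ! j))"
  unfolding ht_def by (simp add: sum_list_sum_nth atLeast0LessThan)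

lemma len_cx: "int (length u) = 2 * int (cx u) - ht u"
proof (induction u)
  case Nil then show ?case by (simp add: ht_def)
next
  case (Cons a u) then show ?case by (cases a) (auto simp: ht_def)
qed

lemma catcoeff_zero:
  assumes "i \<le> length u" "(\<Sum>j<i. lbar (u ! j)) < 0"
  shows "catcoeff q u = 0"
proof -
  define ps where "ps i = (\<Sum>j<i. lbar (u ! j))" for i
  have ex: "\<exists>i. i \<le> length u \<and> ps i < 0" using assms unfolding ps_def by blast
  define i0 where "i0 = (LEAST i. i \<le> length u \<and> ps i < 0)"
  have i0: "i0 \<le> length u" "ps i0 < 0" using LeastI_ex[OF ex] unfolding i0_def by auto
  have min: "\<And>i. i < i0 \<Longrightarrow> \<not> (i \<le> length u \<and> ps i < 0)"
    using not_less_Least unfolding i0_def by blast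
  have "i0 \<noteq> 0"
  proof
    assume "i0 = 0"
    then have "ps i0 = 0" by (simp add: ps_def)
    with i0(2) show False by simp
  qed
  then obtain k where k: "i0 = Suc k" by (cases i0) auto
  have "ps k \<ge> 0" using min[of k] k i0 by auto
  moreover have "ps i0 = ps k + lbar (u ! k)" using k by (simp add: ps_def)
  moreover have "lbar (u ! k) \<ge> -1" by (simp add: lbar_def)
  ultimately have "ps i0 = -1" using i0 by linarith
  then have "qint q (1 + ps i0) = 0" by simp
  moreover have "i0 \<in> {0..length u}" using i0 by simp
  ultimately show ?thesis unfolding catcoeff_def ps_def
    by (intro prod_zero) auto
qed

lemma cx_append: "cx (a @ b) = cx a + cx b" by (simp add: cx_def)

lemma lookup_xvy: "Poly_Mapping.lookup (xvy p) v = (if (\<exists>u. v = X # u @ [Y]) then Poly_Mapping.lookup p (butlast (tl v)) else 0)"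
proof -
  have "Poly_Mapping.lookup (xvy p) v = (\<Sum>w\<in>Poly_Mapping.keys p. (Poly_Mapping.lookup p w when X # w @ [Y] = v))"
    unfolding xvy_def by (simp add: lookup_sum lookup_single)
  also have "\<dots> = (if (\<exists>u. v = X # u @ [Y]) then Poly_Mapping.lookup p (butlast (tl v)) else 0)"
  proof (cases "\<exists>u. v = X # u @ [Y]")
    case True
    then obtain u where u: "v = X # u @ [Y]" by blast
    have "(\<Sum>w\<in>Poly_Mapping.keys p. (Poly_Mapping.lookup p w when X # w @ [Y] = v))
        = (\<Sum>w\<in>Poly_Mapping.keys p. if w = u then Poly_Mapping.lookup p u else 0)"
      by (rule sum.cong) (auto simp: when_def u)
    also have "\<dots> = Poly_Mapping.lookup p u" by (auto simp: in_keys_iff)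
    finally show ?thesis using u by simp
  next
    case False
    then have "\<And>w. (Poly_Mapping.lookup p w when X # w @ [Y] = v) = 0" by (auto simp: when_def)
    then show ?thesis using False by simp
  qed
  finally show ?thesis .
qed

context qctx
begin

lemma E_prod: "E q h u = (if h + ht u = 0 then (\<Prod>i\<in>{0..length u}. qint q (1 + h + (\<Sum>j<i. lbar (u ! j)))) else 0)"
proof (induction u arbitrary: h)
  case Nil then show ?case by (simp add: ht_def)
next
  case (Cons a u)
  have p: "(\<Prod>i\<in>{0..length (a#u)}. qint q (1 + h + (\<Sum>j<i. lbar ((a#u) ! j))))
      = qint q (1 + h) * (\<Prod>i\<in>{0..length u}. qint q (1 + (h + lbar a) + (\<Sum>j<i. lbar (u ! j))))"
    by (simp add: prod.atLeast0_atMost_Suc_shift sum.lessThan_Suc_shift algebra_simps del: prod.cl_ivl_Suc sum.lessThan_Suc)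
  show ?case using Cons.IH[of "h + lbar a"] p by (simp add: ht_def algebra_simps)
qed

lemma lookup_Cat_R: "Poly_Mapping.lookup (Cat q n) u = R n (E q 0) u"
proof -
  have E0: "E q 0 u = (if ht u = 0 then catcoeff q u else 0)"
    by (simp add: E_prod catcoeff_def)
  show ?thesis
  proof (cases "length u = 2 * n \<and> catalan u")
    case True
    then have "(\<Sum>j<length u. lbar (u ! j)) = 0" unfolding catalan_def by blast
    then have "ht u = 0" by (simp only: ht_nth)
    moreover then have "cx u = n" using True len_cx[of u] by simp
    ultimately show ?thesis using True by (simp add: lookup_Cat R_def E0)
  next
    case False
    have "R n (E q 0) u = 0"
    proof (cases "cx u = n \<and> ht u = 0")
      case True
      then have len: "length u = 2 * n" using len_cx[of u] by simp
      with False have "\<not> catalan u" by simp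
      moreover have "(\<Sum>j<length u. lbar (u ! j)) = 0" using True by (simp add: ht_nth)
      ultimately obtain i where "i \<in> {1..<length u}" "(\<Sum>j<i. lbar (u ! j)) < 0"
        unfolding catalan_def by auto
      then have "catcoeff q u = 0" by (intro catcoeff_zero[of i]) auto
      then show ?thesis by (simp add: R_def E0)
    next
      case False then show ?thesis by (auto simp: R_def E0)
    qed
    moreover have "Poly_Mapping.lookup (Cat q n) u = 0" using False by (simp only: lookup_Cat if_False)
    ultimately show ?thesis by simp
  qed
qed

lemma lookup_xvy_Cat: "Poly_Mapping.lookup (xvy (Cat q k)) = R (Suc k) (P q)"
proof
  fix v
  show "Poly_Mapping.lookup (xvy (Cat q k)) v = R (Suc k) (P q) v"
  proof (cases "\<exists>u. v = X # u @ [Y]")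
    case True
    then obtain u where u: "v = X # u @ [Y]" by blast
    have "P q v = E q 0 u" by (simp add: u P_def Ey_def)
    then show ?thesis using u by (simp add: lookup_xvy lookup_Cat_R R_def cx_append)
  next
    case False
    have "P q v = 0"
    proof (cases v)
      case Nil then show ?thesis by (simp add: P_def)
    next
      case (Cons a u)
      show ?thesis
      proof (cases "a = X \<and> u \<noteq> [] \<and> last u = Y")
        case True
        then have "v = X # butlast u @ [Y]" using Cons by (metis append_butlast_last_id)
        then show ?thesis using False by blast
      next
        case False then show ?thesis using Cons by (auto simp: P_def Ey_def)
      qed
    qed
    then show ?thesis using False by (simp add: lookup_xvy R_def)
  qed
qed

end

lemma R_dlt: "R i (dlt [X]) = (if i = 1 then dlt [X] else (\<lambda>w. 0))"
  "R i (dlt [Y]) = (if i = 0 then dlt [Y] else (\<lambda>w. 0))"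
  "R i (dlt []) = (if i = 0 then dlt [] else (\<lambda>w. 0))"
  by (auto simp: R_def dlt_def fun_eq_iff)

lemma R_star_single_l:
  assumes F: "\<And>i. R i F = (if i = k then F else (\<lambda>w. 0))" and k: "k \<le> m"
  shows "R m (star q F G) w = star q F (R (m - k) G) w"
proof -
  have "R m (star q F G) w = (\<Sum>i\<le>m. star q (R i F) (R (m - i) G) w)" by (rule R_star)
  also have "\<dots> = (\<Sum>i\<le>m. if i = k then star q F (R (m - k) G) w else 0)"
    by (rule sum.cong) (auto simp: F)
  also have "\<dots> = star q F (R (m - k) G) w" using k by simp
  finally show ?thesis .
qed

lemma R_star_single_r:
  assumes G: "\<And>i. R i G = (if i = k then G else (\<lambda>w. 0))" and k: "k \<le> m"
  shows "R m (star q F G) w = star q (R (m - k) F) G w"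
proof -
  have "R m (star q F G) w = (\<Sum>i\<le>m. star q (R i F) (R (m - i) G) w)" by (rule R_star)
  also have "\<dots> = (\<Sum>i\<le>m. if i = m - k then star q (R (m - k) F) G w else 0)"
    by (rule sum.cong) (use k in \<open>auto simp: G\<close>)
  also have "\<dots> = star q (R (m - k) F) G w" by simp
  finally show ?thesis .
qed

lemma inU_lin: "inU q F \<Longrightarrow> inU q G \<Longrightarrow> inU q (\<lambda>w. a * F w + b * G w)"
  by (intro inU_add inU_scale)

context qctx
begin

lemma R0_E: "R 0 (E q 0) = dlt []"
proof
  fix w :: "letter list"
  show "R 0 (E q 0) w = dlt [] w"
  proof (cases w)
    case Nil then show ?thesis by (simp add: R_def dlt_def)
  next
    case (Cons a u) then show ?thesis by (cases a) (auto simp: R_def dlt_def)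
  qed
qed

lemma R0_P: "R 0 (P q) = (\<lambda>w. 0)"
  by (auto simp: R_def P_def fun_eq_iff split: list.splits)

lemma G1: "(q - inverse q) * (R (Suc n) (A q) w - R (Suc n) (dlt [X]) w)
    = star q (dlt [X]) (R n (P q)) w - star q (R n (P q)) (dlt [X]) w"
proof -
  have "(q - inverse q) * (R (Suc n) (A q) w - R (Suc n) (dlt [X]) w)
      = R (Suc n) (\<lambda>w. (q - inverse q) * (A q w - dlt [X] w)) w" by (simp add: R_def)
  also have "\<dots> = R (Suc n) (star q (dlt [X]) (P q)) w - R (Suc n) (star q (P q) (dlt [X])) w"
    by (simp add: id1 R_def)
  also have "R (Suc n) (star q (dlt [X]) (P q)) w = star q (dlt [X]) (R n (P q)) w"
    using R_star_single_l[of "dlt [X]" 1 "Suc n" q "P q" w] by (simp add: R_dlt)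
  also have "R (Suc n) (star q (P q) (dlt [X])) w = star q (R n (P q)) (dlt [X]) w"
    using R_star_single_r[of "dlt [X]" 1 "Suc n" q "P q" w] by (simp add: R_dlt)
  finally show ?thesis .
qed

lemma G2: "(q - inverse q) * R (Suc n) (E q 0) w
    = q powi 2 * star q (R (Suc n) (A q)) (dlt [Y]) w - star q (dlt [Y]) (R (Suc n) (A q)) w"
proof -
  have "(q - inverse q) * R (Suc n) (E q 0) w
      = R (Suc n) (\<lambda>w. (q - inverse q) * (E q 0 w - dlt [] w)) w" by (simp add: R_def dlt_def)
  also have "\<dots> = q powi 2 * R (Suc n) (star q (A q) (dlt [Y])) w - R (Suc n) (star q (dlt [Y]) (A q)) w"
    by (simp add: id2 R_def)
  also have "R (Suc n) (star q (A q) (dlt [Y])) w = star q (R (Suc n) (A q)) (dlt [Y]) w"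
    using R_star_single_r[of "dlt [Y]" 0 "Suc n" q "A q" w] by (simp add: R_dlt)
  also have "R (Suc n) (star q (dlt [Y]) (A q)) w = star q (dlt [Y]) (R (Suc n) (A q)) w"
    using R_star_single_l[of "dlt [Y]" 0 "Suc n" q "A q" w] by (simp add: R_dlt)
  finally show ?thesis .
qed

lemma R_SP: "R i (SP q c) = (\<lambda>w. c ^ i * R i (P q) w)"
  by (auto simp: R_def SP_def fun_eq_iff)

lemma G3: "(q - inverse q) * of_nat (Suc k) * R (Suc k) (E q 0) w
   = ((q powi 2) ^ Suc k - (q powi (-2)) ^ Suc k) * R (Suc k) (P q) w
     + (\<Sum>i\<le>k. (q powi 2) ^ i * star q (R i (P q)) (R (Suc k - i) (E q 0)) w)
     - (\<Sum>i\<le>k. (q powi (-2)) ^ (k - i) * star q (R (Suc i) (E q 0)) (R (k - i) (P q)) w)"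
proof -
  let ?c = "q powi 2" and ?d = "q powi (-2)"
  have "(q - inverse q) * of_nat (Suc k) * R (Suc k) (E q 0) w = R (Suc k) (\<lambda>w. (q - inverse q) * NE q 0 w) w"
    by (simp add: R_def NE_def)
  also have "\<dots> = R (Suc k) (star q (SP q ?c) (E q 0)) w - R (Suc k) (star q (E q 0) (SP q ?d)) w"
    by (simp add: Iid R_def)
  also have "R (Suc k) (star q (SP q ?c) (E q 0)) w
      = (\<Sum>i\<le>Suc k. ?c ^ i * star q (R i (P q)) (R (Suc k - i) (E q 0)) w)"
    by (simp add: R_star R_SP)
  also have "\<dots> = (\<Sum>i\<le>k. ?c ^ i * star q (R i (P q)) (R (Suc k - i) (E q 0)) w) + ?c ^ Suc k * R (Suc k) (P q) w"
    by (simp add: R0_E)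
  also have "R (Suc k) (star q (E q 0) (SP q ?d)) w
      = (\<Sum>i\<le>Suc k. ?d ^ (Suc k - i) * star q (R i (E q 0)) (R (Suc k - i) (P q)) w)"
    by (simp add: R_star R_SP)
  also have "\<dots> = ?d ^ Suc k * R (Suc k) (P q) w + (\<Sum>i\<le>k. ?d ^ (k - i) * star q (R (Suc i) (E q 0)) (R (k - i) (P q)) w)"
    by (simp only: sum.atMost_Suc_shift) (simp add: R0_E)
  finally show ?thesis by (simp add: algebra_simps)
qed


lemma main_ind: "inU q (R m (E q 0)) \<and> inU q (R m (P q))"
proof (induction m rule: less_induct)
  case (less m)
  show ?case
  proof (cases m)
    case 0
    have "inU q (dlt [])" by (rule inU_one)
    moreover have "inU q (\<lambda>w. 0)" by (rule inU_zero)
    ultimately show ?thesis using 0 by (simp add: R0_E R0_P)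
  next
    case (Suc k)
    have IHE: "\<And>j. j \<le> k \<Longrightarrow> inU q (R j (E q 0))" using less Suc by auto
    have IHP: "\<And>j. j \<le> k \<Longrightarrow> inU q (R j (P q))" using less Suc by auto
    let ?D = "q - inverse q"
    have A: "inU q (R (Suc k) (A q))"
    proof -
      have eq: "R (Suc k) (A q) = (\<lambda>w. 1 * R (Suc k) (dlt [X]) w + inverse ?D *
          (star q (dlt [X]) (R k (P q)) w - star q (R k (P q)) (dlt [X]) w))"
      proof
        fix w show "R (Suc k) (A q) w = 1 * R (Suc k) (dlt [X]) w + inverse ?D *
          (star q (dlt [X]) (R k (P q)) w - star q (R k (P q)) (dlt [X]) w)"
          using G1[of k w] D0 by (simp add: field_simps)
      qed
      have "inU q (R (Suc k) (dlt [X]))" using inU_x[of q] inU_zero[of q] by (simp add: R_dlt)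
      moreover have "inU q (\<lambda>w. 1 * star q (dlt [X]) (R k (P q)) w + (-1) * star q (R k (P q)) (dlt [X]) w)"
        by (intro inU_lin inU_star inU_x IHP) simp_all
      ultimately show ?thesis unfolding eq by (intro inU_lin) (simp_all add: algebra_simps)
    qed
    have E: "inU q (R (Suc k) (E q 0))"
    proof -
      have eq: "R (Suc k) (E q 0) = (\<lambda>w. (inverse ?D * q powi 2) * star q (R (Suc k) (A q)) (dlt [Y]) w
           + (- inverse ?D) * star q (dlt [Y]) (R (Suc k) (A q)) w)"
      proof
        fix w show "R (Suc k) (E q 0) w = (inverse ?D * q powi 2) * star q (R (Suc k) (A q)) (dlt [Y]) w
           + (- inverse ?D) * star q (dlt [Y]) (R (Suc k) (A q)) w"
        proof -
          have "R (Suc k) (E q 0) w = inverse ?D * (?D * R (Suc k) (E q 0) w)" using D0 by simp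
          also have "\<dots> = inverse ?D * (q powi 2 * star q (R (Suc k) (A q)) (dlt [Y]) w - star q (dlt [Y]) (R (Suc k) (A q)) w)"
            using G2[of k w] by simp
          finally show ?thesis by (simp add: algebra_simps)
        qed
      qed
      show ?thesis unfolding eq by (intro inU_lin inU_star A inU_y)
    qed
    have IHE': "\<And>j. j \<le> Suc k \<Longrightarrow> inU q (R j (E q 0))" using IHE E by (metis le_SucE)
    let ?c = "q powi 2" and ?d = "q powi (-2)"
    let ?K = "?c ^ Suc k - ?d ^ Suc k"
    have K0: "?K \<noteq> 0"
    proof -
      have "?c ^ Suc k = q powi (2 * int (Suc k))" by (rule power_int_power')
      moreover have "?d ^ Suc k = q powi (- (2 * int (Suc k)))" by (subst power_int_power') simp
      ultimately have "?K = ?D * qint q (2 * int (Suc k))" by (simp add: qint_mul)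
      moreover have "qint q (2 * int (Suc k)) \<noteq> 0" by (rule qnz) simp
      ultimately show ?thesis using D0 by simp
    qed
    define S1 where "S1 = (\<lambda>w. \<Sum>i\<le>k. ?c ^ i * star q (R i (P q)) (R (Suc k - i) (E q 0)) w)"
    define S2 where "S2 = (\<lambda>w. \<Sum>i\<le>k. ?d ^ (k - i) * star q (R (Suc i) (E q 0)) (R (k - i) (P q)) w)"
    have S1: "inU q S1" unfolding S1_def
      by (intro inU_sum inU_scale inU_star IHP IHE') auto
    have S2: "inU q S2" unfolding S2_def
      by (intro inU_sum inU_scale inU_star IHP IHE') auto
    have eq: "R (Suc k) (P q) = (\<lambda>w. inverse ?K * (?D * of_nat (Suc k) * R (Suc k) (E q 0) w) + (- inverse ?K) * (S1 w - S2 w))"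
    proof
      fix w
      have g: "?D * of_nat (Suc k) * R (Suc k) (E q 0) w = ?K * R (Suc k) (P q) w + S1 w - S2 w"
        using G3[of k w] unfolding S1_def S2_def by simp
      show "R (Suc k) (P q) w = inverse ?K * (?D * of_nat (Suc k) * R (Suc k) (E q 0) w) + (- inverse ?K) * (S1 w - S2 w)"
      proof -
        have "R (Suc k) (P q) w = inverse ?K * (?K * R (Suc k) (P q) w)" using K0 by simp
        also have "?K * R (Suc k) (P q) w = ?D * of_nat (Suc k) * R (Suc k) (E q 0) w - (S1 w - S2 w)"
          using g by (simp add: algebra_simps)
        finally show ?thesis by (simp add: algebra_simps)
      qed
    qed
    have "inU q (\<lambda>w. 1 * S1 w + (-1) * S2 w)" by (intro inU_lin S1 S2)
    then have "inU q (\<lambda>w. S1 w - S2 w)" by simp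
    then have P: "inU q (R (Suc k) (P q))" unfolding eq
      by (intro inU_lin inU_scale E)
    show ?thesis using E P Suc by simp
  qed
qed

end

theorem lemma7p2:
  fixes q :: "'f::field_char_0" and k :: nat
  assumes "q \<noteq> 0"
    and "\<And>n::nat. n > 0 \<Longrightarrow> q ^ n \<noteq> 1"
  shows "xvy (Cat q k) \<in> Ualg q"
proof -
  have qq: "q * q \<noteq> 1" using assms(2)[of 2] by (simp add: power2_eq_square)
  have qnz: "qint q n \<noteq> 0" if "n \<noteq> 0" for n :: int
  proof
    assume z: "qint q n = 0"
    have D: "q - inverse q \<noteq> 0" using assms(1) qq by (auto simp: field_simps)
    from z D have e0: "q powi n = q powi (-n)" by (simp add: qint_def)
    have a1: "q powi (n + n) = q powi n * q powi n" by (rule power_int_add) (simp add: assms(1))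
    have a2: "q powi (n + -n) = q powi n * q powi (-n)" by (rule power_int_add) (simp add: assms(1))
    have e: "q powi (n + n) = 1" using a1 a2 e0 by simp
    show False
    proof (cases "n > 0")
      case True
      then have "q ^ nat (n + n) = 1" using e by (simp add: power_int_def)
      moreover have "nat (n + n) > 0" using True by simp
      ultimately show False using assms(2) by blast
    next
      case False
      then have n: "n < 0" using that by simp
      then have "inverse q ^ nat (- (n + n)) = 1" using e by (simp add: power_int_def)
      then have "inverse (q ^ nat (- (n + n))) = 1" by (simp add: power_inverse)
      then have "q ^ nat (- (n + n)) = 1" by (metis inverse_1 inverse_inverse_eq)
      moreover have "nat (- (n + n)) > 0" using n by simp
      ultimately show False using assms(2) by blast
    qed
  qed
  interpret qctx q using assms(1) qq qnz by unfold_locales auto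
  have "inU q (R (Suc k) (P q))" using main_ind by blast
  then obtain p where p: "p \<in> Ualg q" "Poly_Mapping.lookup p = R (Suc k) (P q)"
    unfolding inU_def by blast
  have "p = xvy (Cat q k)" using p(2) lookup_xvy_Cat[of k] by (metis poly_mapping_eqI)
  then show ?thesis using p(1) by simp
qed

end
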